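(* Let $1<p<\infty$, $0<\alpha<\frac np$, $0<q<p-1$, and let $\nu,\sigma$ be nonnegative locally finite Radon measures on $\mathbb{R}^n$. Then there is a constant $C>0$ depending only on $p,q,\alpha,n$ such that $$\mathbf{W}[(\mathbf{W}\nu)^q\,d\sigma](x)\le C\,(\mathbf{W}\nu(x))^{\frac q{p-1}}\Big[\mathbf{W}\sigma(x)+(\mathbf{K}\sigma(x))^{\frac{p-1-q}{p-1}}\Big],\qquad x\in\mathbb{R}^n.$$
   Context: $\mathbf{W}\nu(x)=\mathbf{W}_{\alpha,p}\nu(x)=\int_0^\infty\big[\nu(B(x,t))/t^{n-\alpha p}\big]^{\frac1{p-1}}\frac{dt}{t}$, with $B(x,t)$ the ball of radius $t$ centered at $x$. For a Borel set $E$, $\kappa(E)$ is the least constant such that $\|\mathbf{W}\nu\|_{L^q(d\sigma_E)}\le\kappa(E)\,\nu(\mathbb{R}^n)^{\frac1{p-1}}$ for all nonnegative Radon measures $\nu$, where $\sigma_E$ is the restriction of $\sigma$ to $E$. The intrinsic potential is $\mathbf{K}\sigma(x)=\mathbf{K}_{\alpha,p,q}\sigma(x)=\int_0^\infty\Big[\frac{\kappa(B(x,t))^{\frac{q(p-1)}{p-1-q}}}{t^{n-\alpha p}}\Big]^{\frac1{p-1}}\frac{dt}{t}$. *)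

theory Defs
  imports "HOL-Analysis.Analysis"
begin

text \<open>Real powers of extended nonnegative reals (only used with positive exponents):
  \<open>\<infinity>\<close> to a positive power is \<open>\<infinity>\<close>.\<close>
definition epow :: "ennreal \<Rightarrow> real \<Rightarrow> ennreal" where
  "epow x r = (if x = \<infinity> then (if r > 0 then \<infinity> else if r = 0 then 1 else 0)
               else ennreal (enn2real x powr r))"

text \<open>Nonnegative locally finite Borel (= Radon on R^n) measures.\<close>
definition locfin_measure :: "'a::euclidean_space measure \<Rightarrow> bool" where
  "locfin_measure M \<longleftrightarrow> sets M = sets borel \<and> (\<forall>K. compact K \<longrightarrow> emeasure M K < \<infinity>)"

definition wolff :: "real \<Rightarrow> real \<Rightarrow> 'a::euclidean_space measure \<Rightarrow> 'a \<Rightarrow> ennreal" where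
  "wolff \<alpha> p \<mu> x = (\<integral>\<^sup>+ t\<in>{0<..}.
      epow (emeasure \<mu> (ball x t) / ennreal (t powr (real DIM('a) - \<alpha> * p))) (1 / (p - 1))
      * ennreal (1 / t) \<partial>lborel)"

definition Lq_on :: "real \<Rightarrow> 'a measure \<Rightarrow> 'a set \<Rightarrow> ('a \<Rightarrow> ennreal) \<Rightarrow> ennreal" where
  "Lq_on q \<sigma> E f = epow (\<integral>\<^sup>+ y\<in>E. epow (f y) q \<partial>\<sigma>) (1 / q)"

definition kappa :: "real \<Rightarrow> real \<Rightarrow> real \<Rightarrow> 'a::euclidean_space measure \<Rightarrow> 'a set \<Rightarrow> ennreal" where
  "kappa \<alpha> p q \<sigma> E = Inf {C. \<forall>\<nu>::'a measure. locfin_measure \<nu> \<longrightarrow>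
       Lq_on q \<sigma> E (wolff \<alpha> p \<nu>) \<le> C * epow (emeasure \<nu> UNIV) (1 / (p - 1))}"

definition intrinsic_pot :: "real \<Rightarrow> real \<Rightarrow> real \<Rightarrow> 'a::euclidean_space measure \<Rightarrow> 'a \<Rightarrow> ennreal" where
  "intrinsic_pot \<alpha> p q \<sigma> x = (\<integral>\<^sup>+ t\<in>{0<..}.
      epow (epow (kappa \<alpha> p q \<sigma> (ball x t)) (q * (p - 1) / (p - 1 - q))
             / ennreal (t powr (real DIM('a) - \<alpha> * p))) (1 / (p - 1))
      * ennreal (1 / t) \<partial>lborel)"

end

theory Submission
  imports Defs
begin


lemma epow_0[simp]: "r > 0 \<Longrightarrow> epow 0 r = 0"
  by (simp add: epow_def)

lemma epow_top[simp]: "r > 0 \<Longrightarrow> epow top r = top"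
  by (simp add: epow_def)

lemma epow_top2[simp]: "r > 0 \<Longrightarrow> epow (top::ennreal) r = top"
  unfolding epow_def by (simp add: top_ennreal.rep_eq)

lemma epow_ennreal: "c \<ge> 0 \<Longrightarrow> epow (ennreal c) r = ennreal (c powr r)"
  by (simp add: epow_def)

lemma epow_1[simp]: "epow a 1 = a"
  by (cases a) (auto simp: epow_def)

lemma epow_mono: assumes "r > 0" "a \<le> b" shows "epow a r \<le> epow b r"
proof (cases "b = top")
  case True then show ?thesis using assms by (simp add: epow_def)
next
  case False
  then obtain y where y: "b = ennreal y" "y \<ge> 0" by (cases b) auto
  with assms obtain z where z: "a = ennreal z" "z \<ge> 0" "z \<le> y"
    by (cases a) (auto simp: ennreal_le_iff2 top_unique)
  then show ?thesis using y assms
    by (simp add: epow_ennreal powr_mono2 ennreal_leI)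
qed

lemma epow_eq_0_iff: "r > 0 \<Longrightarrow> epow a r = 0 \<longleftrightarrow> a = 0"
  by (cases a) (auto simp: epow_def)

lemma epow_mult: assumes r: "r > 0" shows "epow (a * b) r = epow a r * epow b r"
proof (cases a rule: ennreal_cases)
  case (real y)
  note a = this
  show ?thesis
  proof (cases b rule: ennreal_cases)
    case (real z)
    then show ?thesis using a
      by (simp add: epow_ennreal ennreal_mult'[symmetric] powr_mult)
  next
    case top
    show ?thesis
    proof (cases "y = 0")
      case True then show ?thesis using a top r by simp
    next
      case False
      then have "a * b = top" using a top by (simp add: ennreal_mult_top)
      moreover have "epow a r \<noteq> 0" using a False r by (simp add: epow_eq_0_iff)
      ultimately show ?thesis using top r by (simp add: ennreal_mult_top epow_top[OF r] top_unique)
    qed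
  qed
next
  case top
  show ?thesis
  proof (cases "b = 0")
    case True then show ?thesis using top r by simp
  next
    case False
    then have "a * b = top" using top by (simp add: ennreal_top_mult)
    moreover have "epow b r \<noteq> 0" using False r by (simp add: epow_eq_0_iff)
    ultimately show ?thesis using top r by (simp add: ennreal_top_mult epow_top[OF r] top_unique)
  qed
qed

lemma epow_epow: assumes "r > 0" "s > 0" shows "epow (epow a r) s = epow a (r * s)"
  using assms by (cases a) (auto simp: epow_def powr_powr mult_pos_pos)

lemma epow_max: "r > 0 \<Longrightarrow> epow (max a b) r = max (epow a r) (epow b r)"
  by (metis epow_mono max.absorb1 max.absorb2 max_def nle_le)

lemma epow_add_le: assumes "r > 0"
  shows "epow (a + b) r \<le> ennreal (2 powr r) * (epow a r + epow b r)"
proof -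
  have "a + b \<le> 2 * max a b"
    by (metis add_mono max.cobounded1 max.cobounded2 mult_2)
  then have "epow (a + b) r \<le> epow (2 * max a b) r" by (rule epow_mono[OF assms])
  also have "\<dots> = ennreal (2 powr r) * max (epow a r) (epow b r)"
    using assms by (simp add: epow_mult epow_max epow_ennreal[of 2, simplified])
  also have "\<dots> \<le> ennreal (2 powr r) * (epow a r + epow b r)"
    by (intro mult_left_mono) (auto simp: max_def add_increasing add_increasing2)
  finally show ?thesis .
qed

lemma epow_divide: assumes "r > 0" "c > 0"
  shows "epow (a / ennreal c) r = epow a r * ennreal (c powr (-r))"
proof -
  have "a / ennreal c = a * ennreal (1/c)" using assms
    by (simp add: divide_ennreal_def ennreal_inverse_positive flip: divide_ennreal)
  then show ?thesis using assms
    by (simp add: epow_mult epow_ennreal powr_minus_divide powr_divide)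
qed

lemma epow_measurable[measurable]:
  assumes [measurable]: "f \<in> borel_measurable M"
  shows "(\<lambda>x. epow (f x) r) \<in> borel_measurable M"
  unfolding epow_def by measurable



lemma locfin_space: "locfin_measure \<mu> \<Longrightarrow> space \<mu> = UNIV"
  unfolding locfin_measure_def by (metis sets_eq_imp_space_eq space_borel)

lemma locfin_sets: "locfin_measure \<mu> \<Longrightarrow> sets \<mu> = sets borel"
  unfolding locfin_measure_def by simp

lemma locfin_compact: "locfin_measure \<mu> \<Longrightarrow> compact K \<Longrightarrow> emeasure \<mu> K < top"
  unfolding locfin_measure_def by simp

lemma locfin_intro: "sets \<mu> = sets borel \<Longrightarrow> (\<And>K. compact K \<Longrightarrow> emeasure \<mu> K < top) \<Longrightarrow> locfin_measure \<mu>"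
  unfolding locfin_measure_def by simp

lemma locfin_sigma_finite:
  fixes \<mu> :: "'a::euclidean_space measure"
  assumes "locfin_measure \<mu>" shows "sigma_finite_measure \<mu>"
proof (rule sigma_finite_measure.intro)
  let ?A = "range (\<lambda>n::nat. cball (0::'a) (real n))"
  have s: "sets \<mu> = sets borel" by (rule locfin_sets[OF assms])
  have 1: "?A \<subseteq> sets \<mu>" unfolding s by auto
  have "\<exists>n::nat. z \<in> cball (0::'a) (real n)" for z
    using real_arch_simple[of "norm z"] by (auto simp: mem_cball_0)
  then have 2: "\<Union> ?A = space \<mu>"
    using locfin_space[OF assms] by blast
  have 3: "\<forall>a\<in>?A. emeasure \<mu> a \<noteq> top"
  proof
    fix a assume "a \<in> ?A"
    then obtain n where "a = cball 0 (real n)" by auto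
    then have "compact a" by simp
    then have "emeasure \<mu> a < top" by (rule locfin_compact[OF assms])
    then show "emeasure \<mu> a \<noteq> top" by simp
  qed
  show "\<exists>A. countable A \<and> A \<subseteq> sets \<mu> \<and> \<Union> A = space \<mu> \<and> (\<forall>a\<in>A. emeasure \<mu> a \<noteq> \<infinity>)"
    apply (rule exI[of _ ?A])
    using 1 2 3 by simp
qed

lemma ball_emeasure_measurable:
  fixes \<mu> :: "'a::euclidean_space measure"
  assumes "locfin_measure \<mu>"
  shows "(\<lambda>yt. emeasure \<mu> (ball (fst yt) (snd yt))) \<in> borel_measurable (borel :: ('a \<times> real) measure)"
proof -
  interpret sigma_finite_measure \<mu> by (rule locfin_sigma_finite[OF assms])
  define Q where "Q = {(yt, z::'a). dist (fst yt) z < snd yt}"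
  have "Q = {w. dist (fst (fst w)) (snd w) < snd (fst w)}" unfolding Q_def by auto
  moreover have "open {w::('a\<times>real)\<times>'a. dist (fst (fst w)) (snd w) < snd (fst w)}"
    by (intro open_Collect_less continuous_intros)
  ultimately have "open Q" by simp
  then have "Q \<in> sets (borel :: (('a \<times> real) \<times> 'a) measure)" by simp
  also have "sets (borel :: (('a \<times> real) \<times> 'a) measure) = sets (borel \<Otimes>\<^sub>M \<mu>)"
    using locfin_sets[OF assms] by (simp add: borel_prod[symmetric] cong: sets_pair_measure_cong)
  finally have "(\<lambda>x. emeasure \<mu> (Pair x -` Q)) \<in> borel_measurable borel"
    by (rule measurable_emeasure_Pair)
  moreover have "\<And>yt. Pair yt -` Q = ball (fst yt) (snd yt)"
    by (auto simp: Q_def ball_def)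
  ultimately show ?thesis by simp
qed



definition wt :: "real \<Rightarrow> real \<Rightarrow> real \<Rightarrow> ennreal" where
  "wt s g t = ennreal (t powr (- (s * g) - 1))"

lemma wt_measurable[measurable]: "wt s g \<in> borel_measurable borel"
  unfolding wt_def by measurable

lemma integrand_eq:
  assumes "t > 0" "g > 0"
  shows "epow (m / ennreal (t powr s)) g * ennreal (1/t) = epow m g * wt s g t"
proof -
  have "epow (m / ennreal (t powr s)) g = epow m g * ennreal ((t powr s) powr (-g))"
    using assms by (simp add: epow_divide)
  moreover have "(t powr s) powr (-g) * (1/t) = t powr (- (s * g) - 1)"
    using assms by (simp add: powr_powr powr_diff powr_minus_divide divide_simps)
  ultimately show ?thesis using assms
    by (simp add: wt_def mult.assoc ennreal_mult'[symmetric])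
qed

lemma wolff_alt:
  fixes \<mu> :: "'a::euclidean_space measure"
  assumes "p > 1"
  shows "wolff \<alpha> p \<mu> y = (\<integral>\<^sup>+ t\<in>{0<..}. epow (emeasure \<mu> (ball y t)) (1/(p-1))
      * wt (real DIM('a) - \<alpha> * p) (1/(p-1)) t \<partial>lborel)"
  unfolding wolff_def
  by (intro nn_integral_cong) (auto simp: integrand_eq assms indicator_def)

lemma intrinsic_alt:
  fixes \<sigma> :: "'a::euclidean_space measure"
  assumes "p > 1"
  shows "intrinsic_pot \<alpha> p q \<sigma> x = (\<integral>\<^sup>+ t\<in>{0<..}. epow (epow (kappa \<alpha> p q \<sigma> (ball x t)) (q * (p - 1) / (p - 1 - q))) (1/(p-1))
      * wt (real DIM('a) - \<alpha> * p) (1/(p-1)) t \<partial>lborel)"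
  unfolding intrinsic_pot_def
  by (intro nn_integral_cong) (auto simp: integrand_eq assms indicator_def)

lemma sets_borel_lborel: "sets ((borel::'a::euclidean_space measure) \<Otimes>\<^sub>M lborel) = sets (borel :: ('a \<times> real) measure)"
  by (simp add: borel_prod[symmetric] cong: sets_pair_measure_cong)

lemma wolff_measurable:
  fixes \<mu> :: "'a::euclidean_space measure"
  assumes "locfin_measure \<mu>" "p > 1"
  shows "wolff \<alpha> p \<mu> \<in> borel_measurable borel"
proof -
  have m: "(\<lambda>yt. emeasure \<mu> (ball (fst yt) (snd yt))) \<in> borel_measurable ((borel::'a measure) \<Otimes>\<^sub>M lborel)"
    using ball_emeasure_measurable[OF assms(1)] measurable_cong_sets[OF sets_borel_lborel refl] by blast
  have "(\<lambda>(y,t). epow (emeasure \<mu> (ball y t)) (1/(p-1))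
      * wt (real DIM('a) - \<alpha> * p) (1/(p-1)) t * indicator {0<..} t) \<in> borel_measurable ((borel::'a measure) \<Otimes>\<^sub>M lborel)"
    using m by (simp add: case_prod_beta') measurable
  then have "(\<lambda>y. \<integral>\<^sup>+ t. epow (emeasure \<mu> (ball y t)) (1/(p-1))
      * wt (real DIM('a) - \<alpha> * p) (1/(p-1)) t * indicator {0<..} t \<partial>lborel) \<in> borel_measurable borel"
    by (rule lborel.borel_measurable_nn_integral)
  then show ?thesis by (simp add: wolff_alt[OF assms(2), abs_def])
qed



lemma young_ennreal:
  assumes "0 < \<theta>" "\<theta> < 1"
  shows "epow a \<theta> * epow b (1-\<theta>) \<le> ennreal \<theta> * a + ennreal (1-\<theta>) * b"
proof (cases "a = 0 \<or> b = 0")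
  case True then show ?thesis using assms by auto
next
  case F: False
  show ?thesis
  proof (cases "a = top \<or> b = top")
    case True then show ?thesis using assms F by (auto simp: ennreal_mult_top)
  next
    case False
    then obtain x y where xy: "a = ennreal x" "b = ennreal y" "x > 0" "y > 0"
      using F by (cases a; cases b) auto
    have "x powr \<theta> * y powr (1-\<theta>) \<le> \<theta> * x + (1-\<theta>) * y"
      using Youngs_inequality_0[of \<theta> "1-\<theta>" x y] assms xy by auto
    then show ?thesis using xy assms
      by (simp add: epow_ennreal ennreal_mult'[symmetric] ennreal_plus[symmetric] ennreal_leI del: ennreal_plus)
  qed
qed

lemma times_divide_ennreal: "(c::ennreal) \<noteq> 0 \<Longrightarrow> c \<noteq> top \<Longrightarrow> c * (a / c) = a"
proof -
  assume "c \<noteq> 0" "c \<noteq> top"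
  then have "c / c = 1" by (simp add: top.not_eq_extremum)
  then show "c * (a / c) = a" by (simp add: mult.commute[of c] ennreal_divide_times)
qed

lemma holder_ennreal:
  assumes u[measurable]: "u \<in> borel_measurable M" and v[measurable]: "v \<in> borel_measurable M"
    and th: "0 < \<theta>" "\<theta> < 1"
  shows "(\<integral>\<^sup>+ x. epow (u x) \<theta> * epow (v x) (1-\<theta>) \<partial>M)
     \<le> epow (\<integral>\<^sup>+ x. u x \<partial>M) \<theta> * epow (\<integral>\<^sup>+ x. v x \<partial>M) (1-\<theta>)"
proof -
  define U where "U = (\<integral>\<^sup>+ x. u x \<partial>M)"
  define V where "V = (\<integral>\<^sup>+ x. v x \<partial>M)"
  have th': "0 < 1 - \<theta>" using th by simp
  show ?thesis
  proof (cases "U = 0 \<or> V = 0")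
    case True
    then have "AE x in M. epow (u x) \<theta> * epow (v x) (1-\<theta>) = 0"
    proof
      assume "U = 0"
      then have "AE x in M. u x = 0" unfolding U_def using nn_integral_0_iff_AE[OF u] by simp
      then show ?thesis by eventually_elim (use th in simp)
    next
      assume "V = 0"
      then have "AE x in M. v x = 0" unfolding V_def using nn_integral_0_iff_AE[OF v] by simp
      then show ?thesis by eventually_elim (use th' in simp)
    qed
    then have "(\<integral>\<^sup>+ x. epow (u x) \<theta> * epow (v x) (1-\<theta>) \<partial>M) = 0"
      by (simp add: nn_integral_0_iff_AE)
    then show ?thesis by simp
  next
    case F: False
    show ?thesis
    proof (cases "U = top \<or> V = top")
      case True
      then have "epow U \<theta> * epow V (1-\<theta>) = top"
        using F th th' by (auto simp: epow_eq_0_iff ennreal_mult_top ennreal_top_mult)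
      then show ?thesis unfolding U_def V_def by simp
    next
      case False
      with F have U: "U \<noteq> 0" "U \<noteq> top" and V: "V \<noteq> 0" "V \<noteq> top" by auto
      define c where "c = epow U \<theta> * epow V (1-\<theta>)"
      have pt: "epow (u x) \<theta> * epow (v x) (1-\<theta>) \<le> c * (ennreal \<theta> * (u x / U) + ennreal (1-\<theta>) * (v x / V))" for x
      proof -
        have "epow (u x) \<theta> * epow (v x) (1-\<theta>) = epow (U * (u x / U)) \<theta> * epow (V * (v x / V)) (1-\<theta>)"
          using U V by (simp add: times_divide_ennreal)
        also have "\<dots> = c * (epow (u x / U) \<theta> * epow (v x / V) (1-\<theta>))"
          using th th' by (simp add: epow_mult c_def ac_simps)
        also have "\<dots> \<le> c * (ennreal \<theta> * (u x / U) + ennreal (1-\<theta>) * (v x / V))"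
          by (intro mult_left_mono young_ennreal th) simp
        finally show ?thesis .
      qed
      have "(\<integral>\<^sup>+ x. epow (u x) \<theta> * epow (v x) (1-\<theta>) \<partial>M)
          \<le> (\<integral>\<^sup>+ x. c * (ennreal \<theta> * (u x / U) + ennreal (1-\<theta>) * (v x / V)) \<partial>M)"
        by (intro nn_integral_mono pt)
      also have "\<dots> = c * (ennreal \<theta> * (U / U) + ennreal (1-\<theta>) * (V / V))"
        by (simp add: nn_integral_cmult nn_integral_add nn_integral_divide U_def V_def)
      also have "\<dots> = c * (ennreal \<theta> + ennreal (1-\<theta>))"
        using U V by (simp add: top.not_eq_extremum)
      also have "\<dots> = c" using th by (simp flip: ennreal_plus)
      finally show ?thesis unfolding c_def U_def V_def .
    qed
  qed
qed



lemma Lq_on_mono: "q > 0 \<Longrightarrow> E \<subseteq> E' \<Longrightarrow> Lq_on q \<sigma> E f \<le> Lq_on q \<sigma> E' f"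
  unfolding Lq_on_def
  by (intro epow_mono nn_integral_mono) (auto simp: indicator_def)

lemma kappa_mono:
  assumes "q > 0" "E \<subseteq> E'"
  shows "kappa \<alpha> p q \<sigma> E \<le> kappa \<alpha> p q \<sigma> E'"
  unfolding kappa_def
  by (rule Inf_superset_mono) (auto intro: order.trans[OF Lq_on_mono[OF assms]])

lemma kappa_bound:
  fixes \<mu> :: "'a::euclidean_space measure"
  assumes q: "q > 0" and p: "p > 1" and mu: "locfin_measure \<mu>" and fin: "emeasure \<mu> UNIV < top"
  shows "Lq_on q \<sigma> E (wolff \<alpha> p \<mu>) \<le> kappa \<alpha> p q \<sigma> E * epow (emeasure \<mu> UNIV) (1/(p-1))"
proof (cases "emeasure \<mu> UNIV = 0")
  case True
  have "emeasure \<mu> (ball y t) \<le> emeasure \<mu> UNIV" for y t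
    by (rule emeasure_mono) (auto simp: locfin_sets[OF mu])
  then have "emeasure \<mu> (ball y t) = 0" for y t
    using True by (metis le_zero_eq)
  then have "wolff \<alpha> p \<mu> y = 0" for y using p by (simp add: wolff_alt)
  then show ?thesis using q by (simp add: Lq_on_def)
next
  case False
  define X where "X = epow (emeasure \<mu> UNIV) (1/(p-1))"
  define L where "L = Lq_on q \<sigma> E (wolff \<alpha> p \<mu>)"
  have X: "X \<noteq> 0" "X \<noteq> top" using False fin p unfolding X_def
    by (auto simp: epow_eq_0_iff epow_def enn2real_eq_0_iff)
  have "L / X \<le> kappa \<alpha> p q \<sigma> E"
    unfolding kappa_def
  proof (rule Inf_greatest)
    fix C assume "C \<in> {C. \<forall>\<nu>::'a measure. locfin_measure \<nu> \<longrightarrow>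
       Lq_on q \<sigma> E (wolff \<alpha> p \<nu>) \<le> C * epow (emeasure \<nu> UNIV) (1 / (p - 1))}"
    then have "L \<le> C * X" using mu unfolding L_def X_def by auto
    then have "L / X \<le> C * X / X" by (rule divide_right_mono_ennreal)
    also have "\<dots> = C" using X by (simp add: mult_divide_eq_ennreal)
    finally show "L / X \<le> C" .
  qed
  then have "L / X * X \<le> kappa \<alpha> p q \<sigma> E * X" by (rule mult_right_mono) simp
  moreover have "L / X * X = L" using X by (metis mult.commute times_divide_ennreal)
  ultimately show ?thesis unfolding L_def X_def by simp
qed



lemma mono_ennreal_measurable:
  fixes f :: "real \<Rightarrow> ennreal"
  assumes "mono f" shows "f \<in> borel_measurable borel"
proof (rule borel_measurableI_greater)
  fix y
  have "is_interval {x. y < f x}"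
    unfolding is_interval_1 using assms
    by (auto dest: monoD intro: less_le_trans)
  then show "{x \<in> space borel. y < f x} \<in> sets borel"
    by (simp add: real_interval_borel_measurable)
qed

lemma scale2:
  assumes [measurable]: "h \<in> borel_measurable borel"
  shows "(\<integral>\<^sup>+ r\<in>{0<..}. h (2*r) * wt s g r \<partial>lborel) = ennreal (2 powr (s*g)) * (\<integral>\<^sup>+ u\<in>{0<..}. h u * wt s g u \<partial>lborel)"
proof -
  have "(\<integral>\<^sup>+ u\<in>{0<..}. h u * wt s g u \<partial>lborel) = ennreal \<bar>2::real\<bar> * (\<integral>\<^sup>+ r. h (0 + 2*r) * wt s g (0 + 2*r) * indicator {0<..} (0 + 2*r) \<partial>lborel)"
    by (rule nn_integral_real_affine) auto
  also have "(\<integral>\<^sup>+ r. h (0 + 2*r) * wt s g (0 + 2*r) * indicator {0<..} (0 + 2*r) \<partial>lborel)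
      = (\<integral>\<^sup>+ r. ennreal (2 powr (- (s*g) - 1)) * (h (2*r) * wt s g r * indicator {0<..} r) \<partial>lborel)"
  proof (rule nn_integral_cong)
    fix r :: real
    show "h (0 + 2*r) * wt s g (0 + 2*r) * indicator {0<..} (0 + 2*r)
      = ennreal (2 powr (- (s*g) - 1)) * (h (2*r) * wt s g r * indicator {0<..} r)"
    proof (cases "r > 0")
      case True
      then have "wt s g (2*r) = ennreal (2 powr (- (s*g) - 1)) * wt s g r"
        by (simp add: wt_def powr_mult ennreal_mult'[symmetric])
      then show ?thesis using True by (simp add: mult_ac)
    qed (simp add: indicator_def)
  qed
  also have "ennreal \<bar>2::real\<bar> * (\<integral>\<^sup>+ r. ennreal (2 powr (- (s*g) - 1)) * (h (2*r) * wt s g r * indicator {0<..} r) \<partial>lborel)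
     = 2 * (\<integral>\<^sup>+ r. ennreal (2 powr (- (s*g) - 1)) * (h (2*r) * wt s g r * indicator {0<..} r) \<partial>lborel)"
    by simp
  also have "\<dots> = ennreal (2 powr (- (s*g))) * (\<integral>\<^sup>+ r\<in>{0<..}. h (2*r) * wt s g r \<partial>lborel)"
  proof -
    have "2 * ennreal (2 powr (- (s*g) - 1)) = ennreal (2 powr (- (s*g)))"
      by (simp add: powr_diff ennreal_mult'[symmetric] flip: ennreal_numeral)
    moreover have "(\<integral>\<^sup>+ r. ennreal (2 powr (- (s*g) - 1)) * (h (2*r) * wt s g r * indicator {0<..} r) \<partial>lborel)
      = ennreal (2 powr (- (s*g) - 1)) * (\<integral>\<^sup>+ r. h (2*r) * wt s g r * indicator {0<..} r \<partial>lborel)"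
      by (rule nn_integral_cmult) measurable
    ultimately show ?thesis by (simp only: mult.assoc[symmetric])
  qed
  finally have "(\<integral>\<^sup>+ u\<in>{0<..}. h u * wt s g u \<partial>lborel) = ennreal (2 powr (- (s*g))) * (\<integral>\<^sup>+ r\<in>{0<..}. h (2*r) * wt s g r \<partial>lborel)" .
  then have "ennreal (2 powr (s*g)) * (\<integral>\<^sup>+ u\<in>{0<..}. h u * wt s g u \<partial>lborel) = ennreal (2 powr (s*g) * 2 powr (- (s*g))) * (\<integral>\<^sup>+ r\<in>{0<..}. h (2*r) * wt s g r \<partial>lborel)"
    by (simp add: ennreal_mult' mult.assoc)
  also have "2 powr (s*g) * 2 powr (- (s*g)) = 1" by (simp flip: powr_add)
  finally show ?thesis by simp
qed



lemma ball_meas: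
  fixes \<mu> :: "'a::euclidean_space measure"
  assumes "locfin_measure \<mu>" "c \<ge> 0"
  shows "(\<lambda>r. emeasure \<mu> (ball y (c*r))) \<in> borel_measurable borel"
proof (rule mono_ennreal_measurable, rule monoI)
  fix r r' :: real assume "r \<le> r'"
  then have "ball y (c*r) \<subseteq> ball y (c*r')" using assms(2)
    by (intro subset_ball mult_left_mono)
  then show "emeasure \<mu> (ball y (c*r)) \<le> emeasure \<mu> (ball y (c*r'))"
    using locfin_sets[OF assms(1)] by (intro emeasure_mono) auto
qed

lemma ball_meas1:
  fixes \<mu> :: "'a::euclidean_space measure"
  assumes "locfin_measure \<mu>"
  shows "(\<lambda>r. emeasure \<mu> (ball y r)) \<in> borel_measurable borel"
  using ball_meas[OF assms, of 1 y] by simp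

lemma emeasure_restr:
  fixes \<nu> :: "'a::euclidean_space measure"
  assumes "locfin_measure \<nu>" "A \<in> sets borel" "B \<in> sets borel"
  shows "emeasure (density \<nu> (indicator B)) A = emeasure \<nu> (A \<inter> B)"
proof -
  have "emeasure (density \<nu> (indicator B)) A = (\<integral>\<^sup>+ x. indicator B x * indicator A x \<partial>\<nu>)"
    using assms locfin_sets[OF assms(1)] by (subst emeasure_density) auto
  also have "\<dots> = (\<integral>\<^sup>+ x. indicator (A \<inter> B) x \<partial>\<nu>)"
    by (intro nn_integral_cong) (auto simp: indicator_def)
  also have "\<dots> = emeasure \<nu> (A \<inter> B)"
    using assms locfin_sets[OF assms(1)] by (intro nn_integral_indicator) auto
  finally show ?thesis .
qed

lemma restr_locfin:
  fixes \<nu> :: "'a::euclidean_space measure"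
  assumes "locfin_measure \<nu>" "B \<in> sets borel"
  shows "locfin_measure (density \<nu> (indicator B))"
proof (rule locfin_intro)
  show "sets (density \<nu> (indicator B)) = sets borel" using locfin_sets[OF assms(1)] by simp
next
  fix K :: "'a set" assume K: "compact K"
  then have "emeasure (density \<nu> (indicator B)) K = emeasure \<nu> (K \<inter> B)"
    using assms by (intro emeasure_restr) (auto intro: borel_compact)
  also have "\<dots> \<le> emeasure \<nu> K"
    using assms K locfin_sets[OF assms(1)] by (intro emeasure_mono) (auto intro: borel_compact)
  also have "\<dots> < top" using assms(1) K by (rule locfin_compact)
  finally show "emeasure (density \<nu> (indicator B)) K < top" .
qed

lemma step1:
  fixes \<nu> :: "'a::euclidean_space measure"
  assumes nu: "locfin_measure \<nu>" and p: "p > 1" and y: "y \<in> ball x t"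
  shows "wolff \<alpha> p \<nu> y \<le> wolff \<alpha> p (density \<nu> (indicator (ball x (2*t)))) y
     + (\<integral>\<^sup>+ r\<in>{0<..}. epow (emeasure \<nu> (ball x (2*r))) (1/(p-1)) * wt (real DIM('a) - \<alpha> * p) (1/(p-1)) r \<partial>lborel)"
proof -
  define s where "s = real DIM('a) - \<alpha> * p"
  define g where "g = 1/(p-1)"
  have g: "g > 0" using p by (simp add: g_def)
  define \<mu> where "\<mu> = density \<nu> (indicator (ball x (2*t)))"
  have mu: "locfin_measure \<mu>" unfolding \<mu>_def by (rule restr_locfin[OF nu]) auto
  have pt: "epow (emeasure \<nu> (ball y r)) g * wt s g r * indicator {0<..} r
      \<le> epow (emeasure \<mu> (ball y r)) g * wt s g r * indicator {0<..} r
       + epow (emeasure \<nu> (ball x (2*r))) g * wt s g r * indicator {0<..} r" for r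
  proof (cases "r < t")
    case True
    have "ball y r \<subseteq> ball x (2*t)"
    proof
      fix z assume "z \<in> ball y r"
      then have "dist x z < 2*t" using y True dist_triangle[of x z y] by (auto simp: dist_commute)
      then show "z \<in> ball x (2*t)" by simp
    qed
    then have "emeasure \<mu> (ball y r) = emeasure \<nu> (ball y r)"
      unfolding \<mu>_def by (subst emeasure_restr[OF nu]) (auto simp: Int_absorb2)
    then show ?thesis by (simp add: add_increasing2)
  next
    case False
    have "ball y r \<subseteq> ball x (2*r)"
    proof
      fix z assume "z \<in> ball y r"
      then have "dist x z < 2*r" using y False dist_triangle[of x z y] by (auto simp: dist_commute)
      then show "z \<in> ball x (2*r)" by simp
    qed
    then have "emeasure \<nu> (ball y r) \<le> emeasure \<nu> (ball x (2*r))"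
      using locfin_sets[OF nu] by (intro emeasure_mono) auto
    then have "epow (emeasure \<nu> (ball y r)) g * wt s g r * indicator {0<..} r
      \<le> epow (emeasure \<nu> (ball x (2*r))) g * wt s g r * indicator {0<..} r"
      using g by (intro mult_right_mono epow_mono) auto
    then show ?thesis by (simp add: add_increasing)
  qed
  have m1[measurable]: "(\<lambda>r. emeasure \<mu> (ball y r)) \<in> borel_measurable borel" by (rule ball_meas1[OF mu])
  have m2[measurable]: "(\<lambda>r. emeasure \<nu> (ball x (2*r))) \<in> borel_measurable borel" by (rule ball_meas[OF nu]) simp
  have "wolff \<alpha> p \<nu> y = (\<integral>\<^sup>+ r. epow (emeasure \<nu> (ball y r)) g * wt s g r * indicator {0<..} r \<partial>lborel)"
    using p by (simp add: wolff_alt s_def g_def)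
  also have "\<dots> \<le> (\<integral>\<^sup>+ r. epow (emeasure \<mu> (ball y r)) g * wt s g r * indicator {0<..} r
       + epow (emeasure \<nu> (ball x (2*r))) g * wt s g r * indicator {0<..} r \<partial>lborel)"
    by (intro nn_integral_mono pt)
  also have "\<dots> = (\<integral>\<^sup>+ r. epow (emeasure \<mu> (ball y r)) g * wt s g r * indicator {0<..} r \<partial>lborel)
       + (\<integral>\<^sup>+ r. epow (emeasure \<nu> (ball x (2*r))) g * wt s g r * indicator {0<..} r \<partial>lborel)"
    by (intro nn_integral_add) measurable
  also have "\<dots> = wolff \<alpha> p \<mu> y + (\<integral>\<^sup>+ r\<in>{0<..}. epow (emeasure \<nu> (ball x (2*r))) (1/(p-1)) * wt (real DIM('a) - \<alpha> * p) (1/(p-1)) r \<partial>lborel)"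
    using p by (simp add: wolff_alt s_def g_def)
  finally show ?thesis unfolding \<mu>_def .
qed



lemma step34:
  fixes \<nu> \<sigma> :: "'a::euclidean_space measure"
  assumes nu: "locfin_measure \<nu>" and sg: "locfin_measure \<sigma>" and p: "p > 1" and q: "q > 0"
  assumes A2_def: "A2 = (\<integral>\<^sup>+ r\<in>{0<..}. epow (emeasure \<nu> (ball x (2*r))) (1/(p-1)) * wt (real DIM('a) - \<alpha> * p) (1/(p-1)) r \<partial>lborel)"
  shows "emeasure (density \<sigma> (\<lambda>y. epow (wolff \<alpha> p \<nu> y) q)) (ball x t)
    \<le> ennreal (2 powr q) * (epow (kappa \<alpha> p q \<sigma> (ball x t)) q * epow (emeasure \<nu> (ball x (2*t))) (q/(p-1))
        + epow A2 q * emeasure \<sigma> (ball x t))"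
proof -
  define \<mu> where "\<mu> = density \<nu> (indicator (ball x (2*t)))"
  have mu: "locfin_measure \<mu>" unfolding \<mu>_def by (rule restr_locfin[OF nu]) auto
  have wm: "wolff \<alpha> p \<nu> \<in> borel_measurable borel" by (rule wolff_measurable[OF nu p])
  have wmu[measurable]: "wolff \<alpha> p \<mu> \<in> borel_measurable borel" by (rule wolff_measurable[OF mu p])
  have sets\<sigma>: "sets \<sigma> = sets borel" by (rule locfin_sets[OF sg])
  have meq: "\<And>N. measurable \<sigma> N = measurable borel N"
    by (rule measurable_cong_sets[OF sets\<sigma> refl])
  have fm: "(\<lambda>y. epow (wolff \<alpha> p \<nu> y) q) \<in> borel_measurable \<sigma>"
    unfolding meq by (rule epow_measurable[OF wm])
  have gm: "(\<lambda>y. epow (wolff \<alpha> p \<mu> y) q) \<in> borel_measurable \<sigma>"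
    unfolding meq by (rule epow_measurable[OF wmu])
  have bs: "ball x t \<in> sets \<sigma>" using sets\<sigma> by simp
  have D: "emeasure (density \<sigma> (\<lambda>y. epow (wolff \<alpha> p \<nu> y) q)) (ball x t)
      = (\<integral>\<^sup>+ y. epow (wolff \<alpha> p \<nu> y) q * indicator (ball x t) y \<partial>\<sigma>)"
    by (rule emeasure_density[OF fm bs])
  have pt: "epow (wolff \<alpha> p \<nu> y) q * indicator (ball x t) y
     \<le> ennreal (2 powr q) * (epow (wolff \<alpha> p \<mu> y) q * indicator (ball x t) y)
       + ennreal (2 powr q) * (epow A2 q * indicator (ball x t) y)" for y
  proof (cases "y \<in> ball x t")
    case True
    have "epow (wolff \<alpha> p \<nu> y) q \<le> epow (wolff \<alpha> p \<mu> y + A2) q"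
      using step1[OF nu p True] q unfolding \<mu>_def A2_def by (intro epow_mono) auto
    also have "\<dots> \<le> ennreal (2 powr q) * (epow (wolff \<alpha> p \<mu> y) q + epow A2 q)"
      by (rule epow_add_le[OF q])
    finally show ?thesis using True by (simp add: distrib_left)
  qed simp
  have "(\<integral>\<^sup>+ y. epow (wolff \<alpha> p \<nu> y) q * indicator (ball x t) y \<partial>\<sigma>)
      \<le> (\<integral>\<^sup>+ y. ennreal (2 powr q) * (epow (wolff \<alpha> p \<mu> y) q * indicator (ball x t) y)
       + ennreal (2 powr q) * (epow A2 q * indicator (ball x t) y) \<partial>\<sigma>)"
    by (intro nn_integral_mono pt)
  also have "\<dots> = ennreal (2 powr q) * (\<integral>\<^sup>+ y. epow (wolff \<alpha> p \<mu> y) q * indicator (ball x t) y \<partial>\<sigma>)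
       + ennreal (2 powr q) * (epow A2 q * emeasure \<sigma> (ball x t))"
  proof -
    have "(\<integral>\<^sup>+ y. ennreal (2 powr q) * (epow (wolff \<alpha> p \<mu> y) q * indicator (ball x t) y)
       + ennreal (2 powr q) * (epow A2 q * indicator (ball x t) y) \<partial>\<sigma>)
      = (\<integral>\<^sup>+ y. ennreal (2 powr q) * (epow (wolff \<alpha> p \<mu> y) q * indicator (ball x t) y) \<partial>\<sigma>)
       + (\<integral>\<^sup>+ y. ennreal (2 powr q) * (epow A2 q * indicator (ball x t) y) \<partial>\<sigma>)"
      by (rule nn_integral_add) (intro borel_measurable_times_ennreal borel_measurable_const borel_measurable_indicator gm bs)+
    also have "(\<integral>\<^sup>+ y. ennreal (2 powr q) * (epow (wolff \<alpha> p \<mu> y) q * indicator (ball x t) y) \<partial>\<sigma>)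
       = ennreal (2 powr q) * (\<integral>\<^sup>+ y. epow (wolff \<alpha> p \<mu> y) q * indicator (ball x t) y \<partial>\<sigma>)"
      by (rule nn_integral_cmult) (intro borel_measurable_times_ennreal borel_measurable_const borel_measurable_indicator gm bs)
    also have "(\<integral>\<^sup>+ y. ennreal (2 powr q) * (epow A2 q * indicator (ball x t) y) \<partial>\<sigma>)
       = ennreal (2 powr q) * (epow A2 q * emeasure \<sigma> (ball x t))"
      by (subst nn_integral_cmult) ((intro borel_measurable_times_ennreal borel_measurable_const borel_measurable_indicator gm bs), simp add: nn_integral_cmult_indicator[OF bs])
    finally show ?thesis .
  qed
  finally have D1: "emeasure (density \<sigma> (\<lambda>y. epow (wolff \<alpha> p \<nu> y) q)) (ball x t)
      \<le> ennreal (2 powr q) * (\<integral>\<^sup>+ y. epow (wolff \<alpha> p \<mu> y) q * indicator (ball x t) y \<partial>\<sigma>)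
       + ennreal (2 powr q) * (epow A2 q * emeasure \<sigma> (ball x t))" using D by simp
  have muU: "emeasure \<mu> UNIV = emeasure \<nu> (ball x (2*t))"
    unfolding \<mu>_def by (subst emeasure_restr[OF nu]) auto
  have "emeasure \<nu> (ball x (2*t)) \<le> emeasure \<nu> (cball x (2*t))"
    using locfin_sets[OF nu] by (intro emeasure_mono) auto
  also have "\<dots> < top" using nu by (rule locfin_compact) simp
  finally have fin: "emeasure \<mu> UNIV < top" using muU by simp
  define I where "I = (\<integral>\<^sup>+ y. epow (wolff \<alpha> p \<mu> y) q * indicator (ball x t) y \<partial>\<sigma>)"
  have "Lq_on q \<sigma> (ball x t) (wolff \<alpha> p \<mu>) \<le> kappa \<alpha> p q \<sigma> (ball x t) * epow (emeasure \<mu> UNIV) (1/(p-1))"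
    by (rule kappa_bound[OF q p mu fin])
  then have L: "epow I (1/q) \<le> kappa \<alpha> p q \<sigma> (ball x t) * epow (emeasure \<nu> (ball x (2*t))) (1/(p-1))"
    unfolding Lq_on_def I_def muU .
  have "I = epow (epow I (1/q)) q" using q by (simp add: epow_epow)
  also have "\<dots> \<le> epow (kappa \<alpha> p q \<sigma> (ball x t) * epow (emeasure \<nu> (ball x (2*t))) (1/(p-1))) q"
    by (rule epow_mono[OF q L])
  also have "\<dots> = epow (kappa \<alpha> p q \<sigma> (ball x t)) q * epow (emeasure \<nu> (ball x (2*t))) (q/(p-1))"
    using q p by (simp add: epow_mult epow_epow)
  finally have "I \<le> epow (kappa \<alpha> p q \<sigma> (ball x t)) q * epow (emeasure \<nu> (ball x (2*t))) (q/(p-1))" .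
  then have "ennreal (2 powr q) * I + ennreal (2 powr q) * (epow A2 q * emeasure \<sigma> (ball x t))
     \<le> ennreal (2 powr q) * (epow (kappa \<alpha> p q \<sigma> (ball x t)) q * epow (emeasure \<nu> (ball x (2*t))) (q/(p-1)))
       + ennreal (2 powr q) * (epow A2 q * emeasure \<sigma> (ball x t))"
    by (intro add_mono mult_left_mono order_refl) (simp_all add: zero_le)
  with D1 have "emeasure (density \<sigma> (\<lambda>y. epow (wolff \<alpha> p \<nu> y) q)) (ball x t) \<le> ennreal (2 powr q) * (epow (kappa \<alpha> p q \<sigma> (ball x t)) q * epow (emeasure \<nu> (ball x (2*t))) (q/(p-1))) + ennreal (2 powr q) * (epow A2 q * emeasure \<sigma> (ball x t))"
    unfolding I_def by (rule order_trans)
  then show ?thesis by (simp only: distrib_left)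
qed



lemma wt_pos_split: "t > 0 \<Longrightarrow> 0 < \<theta> \<Longrightarrow> \<theta> < 1 \<Longrightarrow> epow (wt s g t) \<theta> * epow (wt s g t) (1-\<theta>) = wt s g t"
proof -
  assume "t > 0" "0 < \<theta>" "\<theta> < 1"
  moreover have "(- (s * g) - 1) * \<theta> + (- (s * g) - 1) * (1 - \<theta>) = - (s * g) - 1"
    by (simp add: algebra_simps)
  ultimately show ?thesis
    by (simp add: wt_def epow_ennreal ennreal_mult'[symmetric] powr_powr flip: powr_add)
qed

theorem lemma3p3:
  fixes p q \<alpha> :: real
  assumes "1 < p" and "0 < \<alpha>" and "\<alpha> < real DIM('a::euclidean_space) / p"
    and "0 < q" and "q < p - 1"
  shows "\<exists>C>0. \<forall>(\<nu>::'a measure) \<sigma>. locfin_measure \<nu> \<longrightarrow> locfin_measure \<sigma> \<longrightarrow>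
    (\<forall>x. wolff \<alpha> p (density \<sigma> (\<lambda>y. epow (wolff \<alpha> p \<nu> y) q)) x
       \<le> ennreal C * epow (wolff \<alpha> p \<nu> x) (q / (p - 1))
           * (wolff \<alpha> p \<sigma> x + epow (intrinsic_pot \<alpha> p q \<sigma> x) ((p - 1 - q) / (p - 1))))"
proof -
  note p = assms(1) and q = assms(4) and qp = assms(5)
  define s where "s = real DIM('a) - \<alpha> * p"
  define g where "g = 1/(p-1)"
  define \<theta> where "\<theta> = q/(p-1)"
  define e where "e = q * (p - 1) / (p - 1 - q)"
  have g: "g > 0" using p by (simp add: g_def)
  have th: "0 < \<theta>" "\<theta> < 1" using p q qp by (auto simp: \<theta>_def field_simps)
  have e: "e > 0" using p q qp by (simp add: e_def)
  have th1: "(p - 1 - q) / (p - 1) = 1 - \<theta>" using p by (simp add: \<theta>_def field_simps)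
  have qg: "q * g = \<theta>" by (simp add: \<theta>_def g_def)
  have gq: "g * q = \<theta>" by (simp add: \<theta>_def g_def)
  have eg: "e * g * (1 - \<theta>) = \<theta>"
  proof -
    have n1: "p - 1 \<noteq> 0" "p - 1 - q \<noteq> 0" using p qp by auto
    have "e * g = q / (p - 1 - q)" using n1 by (simp add: e_def g_def)
    moreover have "1 - \<theta> = (p - 1 - q) / (p - 1)" using th1 by simp
    ultimately have "e * g * (1 - \<theta>) = q / (p - 1 - q) * ((p - 1 - q) / (p - 1))" by simp
    also have "\<dots> = q / (p - 1)" using n1 by simp
    finally show ?thesis by (simp add: \<theta>_def)
  qed
  define C where "C = 2 powr (q*g) * 2 powr g * 2 powr (s*g*\<theta>)"
  have C: "C > 0" by (simp add: C_def)
  show ?thesis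
  proof (intro exI[of _ C] conjI allI impI C)
    fix \<nu> \<sigma> :: "'a measure" and x :: 'a
    assume nu: "locfin_measure \<nu>" and sg: "locfin_measure \<sigma>"
    define A where "A = wolff \<alpha> p \<nu> x"
    define N where "N t = emeasure \<nu> (ball x (2*t))" for t
    define K where "K t = kappa \<alpha> p q \<sigma> (ball x t)" for t
    define A2 where "A2 = (\<integral>\<^sup>+ r\<in>{0<..}. epow (N r) g * wt s g r \<partial>lborel)"
    define D where "D t = emeasure (density \<sigma> (\<lambda>y. epow (wolff \<alpha> p \<nu> y) q)) (ball x t)" for t
    define a where "a t = epow (K t) q * epow (N t) \<theta>" for t
    define b where "b t = epow A2 q * emeasure \<sigma> (ball x t)" for t
    have Nm[measurable]: "N \<in> borel_measurable borel"
      unfolding N_def[abs_def] by (rule ball_meas[OF nu]) simp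
    have Km[measurable]: "K \<in> borel_measurable borel"
      unfolding K_def[abs_def]
      by (intro mono_ennreal_measurable monoI kappa_mono q subset_ball)
    have Sm[measurable]: "(\<lambda>t. emeasure \<sigma> (ball x t)) \<in> borel_measurable borel"
      by (rule ball_meas1[OF sg])
    have hA2: "A2 = ennreal (2 powr (s*g)) * A"
    proof -
      have "A2 = (\<integral>\<^sup>+ r\<in>{0<..}. (\<lambda>u. epow (emeasure \<nu> (ball x u)) g) (2*r) * wt s g r \<partial>lborel)"
        by (simp add: A2_def N_def)
      also have "\<dots> = ennreal (2 powr (s*g)) * (\<integral>\<^sup>+ u\<in>{0<..}. epow (emeasure \<nu> (ball x u)) g * wt s g u \<partial>lborel)"
        by (rule scale2) (use ball_meas1[OF nu] in measurable)
      also have "\<dots> = ennreal (2 powr (s*g)) * A"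
        using p by (simp add: A_def wolff_alt s_def g_def)
      finally show ?thesis .
    qed
    have Dle: "epow (D t) g \<le> ennreal (2 powr (q*g)) * ennreal (2 powr g) * (epow (a t) g + epow (b t) g)" for t
    proof -
      have "D t \<le> ennreal (2 powr q) * (a t + b t)"
        using step34[OF nu sg p q refl, where x=x and t=t and \<alpha>=\<alpha>]
        unfolding D_def a_def b_def A2_def K_def N_def \<theta>_def s_def g_def .
      then have "epow (D t) g \<le> epow (ennreal (2 powr q) * (a t + b t)) g" by (rule epow_mono[OF g])
      also have "\<dots> = ennreal (2 powr (q*g)) * epow (a t + b t) g"
        using g by (simp add: epow_mult epow_ennreal powr_powr)
      also have "\<dots> \<le> ennreal (2 powr (q*g)) * (ennreal (2 powr g) * (epow (a t) g + epow (b t) g))"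
        by (intro mult_left_mono epow_add_le g) simp
      finally show ?thesis by (simp add: mult.assoc)
    qed
    define c0 where "c0 = ennreal (2 powr (q*g)) * ennreal (2 powr g)"
    have LHS: "wolff \<alpha> p (density \<sigma> (\<lambda>y. epow (wolff \<alpha> p \<nu> y) q)) x
        = (\<integral>\<^sup>+ t. epow (D t) g * wt s g t * indicator {0<..} t \<partial>lborel)"
      using p by (simp add: wolff_alt D_def s_def g_def)
    also have "\<dots> \<le> (\<integral>\<^sup>+ t. c0 * (epow (a t) g * wt s g t * indicator {0<..} t)
                  + c0 * (epow (b t) g * wt s g t * indicator {0<..} t) \<partial>lborel)"
    proof (intro nn_integral_mono)
      fix t
      have "epow (D t) g * wt s g t * indicator {0<..} t \<le> c0 * (epow (a t) g + epow (b t) g) * wt s g t * indicator {0<..} t"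
        using Dle[of t] unfolding c0_def by (intro mult_right_mono) auto
      then show "epow (D t) g * wt s g t * indicator {0<..} t \<le> c0 * (epow (a t) g * wt s g t * indicator {0<..} t)
                  + c0 * (epow (b t) g * wt s g t * indicator {0<..} t)"
        by (simp add: distrib_left distrib_right mult.assoc)
    qed
    also have "\<dots> = c0 * (\<integral>\<^sup>+ t. epow (a t) g * wt s g t * indicator {0<..} t \<partial>lborel)
         + c0 * (\<integral>\<^sup>+ t. epow (b t) g * wt s g t * indicator {0<..} t \<partial>lborel)"
      unfolding a_def b_def by (simp add: nn_integral_add nn_integral_cmult)
    finally have L1: "wolff \<alpha> p (density \<sigma> (\<lambda>y. epow (wolff \<alpha> p \<nu> y) q)) x
       \<le> c0 * (\<integral>\<^sup>+ t. epow (a t) g * wt s g t * indicator {0<..} t \<partial>lborel)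
         + c0 * (\<integral>\<^sup>+ t. epow (b t) g * wt s g t * indicator {0<..} t \<partial>lborel)" .
    have Ib: "(\<integral>\<^sup>+ t. epow (b t) g * wt s g t * indicator {0<..} t \<partial>lborel) = epow A2 \<theta> * wolff \<alpha> p \<sigma> x"
    proof -
      have "(\<integral>\<^sup>+ t. epow (b t) g * wt s g t * indicator {0<..} t \<partial>lborel)
          = (\<integral>\<^sup>+ t. epow A2 \<theta> * (epow (emeasure \<sigma> (ball x t)) g * wt s g t * indicator {0<..} t) \<partial>lborel)"
        using q g by (simp add: b_def epow_mult epow_epow qg mult.assoc)
      also have "\<dots> = epow A2 \<theta> * wolff \<alpha> p \<sigma> x"
        using p by (simp add: nn_integral_cmult wolff_alt s_def g_def)
      finally show ?thesis .
    qed
    define u where "u t = epow (N t) g * wt s g t * indicator {0<..} t" for t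
    define v where "v t = epow (epow (K t) e) g * wt s g t * indicator {0<..} t" for t
    have Ia: "(\<integral>\<^sup>+ t. epow (a t) g * wt s g t * indicator {0<..} t \<partial>lborel)
       \<le> epow A2 \<theta> * epow (intrinsic_pot \<alpha> p q \<sigma> x) (1-\<theta>)"
    proof -
      have pt: "epow (a t) g * wt s g t * indicator {0<..} t = epow (u t) \<theta> * epow (v t) (1-\<theta>)" for t
      proof (cases "t > 0")
        case True
        have "epow (u t) \<theta> * epow (v t) (1-\<theta>)
           = epow (N t) (g*\<theta>) * epow (K t) (e*g*(1-\<theta>)) * (epow (wt s g t) \<theta> * epow (wt s g t) (1-\<theta>))"
          using True th g e by (simp add: u_def v_def epow_mult epow_epow mult_ac)
        also have "\<dots> = epow (N t) (g*\<theta>) * epow (K t) \<theta> * wt s g t"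
          using True th by (simp add: wt_pos_split eg)
        also have "\<dots> = epow (a t) g * wt s g t * indicator {0<..} t"
          using True th g q by (simp add: a_def epow_mult epow_epow qg gq mult_ac)
        finally show ?thesis by simp
      qed (use th in \<open>simp add: u_def\<close>)
      have "(\<integral>\<^sup>+ t. epow (a t) g * wt s g t * indicator {0<..} t \<partial>lborel)
          = (\<integral>\<^sup>+ t. epow (u t) \<theta> * epow (v t) (1-\<theta>) \<partial>lborel)"
        by (simp add: pt)
      also have "\<dots> \<le> epow (\<integral>\<^sup>+ t. u t \<partial>lborel) \<theta> * epow (\<integral>\<^sup>+ t. v t \<partial>lborel) (1-\<theta>)"
        by (rule holder_ennreal[OF _ _ th]) (unfold u_def[abs_def] v_def[abs_def], measurable)+
      also have "(\<integral>\<^sup>+ t. u t \<partial>lborel) = A2" by (simp add: u_def A2_def)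
      also have "(\<integral>\<^sup>+ t. v t \<partial>lborel) = intrinsic_pot \<alpha> p q \<sigma> x"
        using p by (simp add: v_def intrinsic_alt K_def e_def s_def g_def)
      finally show ?thesis .
    qed
    have "wolff \<alpha> p (density \<sigma> (\<lambda>y. epow (wolff \<alpha> p \<nu> y) q)) x
       \<le> c0 * (epow A2 \<theta> * epow (intrinsic_pot \<alpha> p q \<sigma> x) (1-\<theta>)) + c0 * (epow A2 \<theta> * wolff \<alpha> p \<sigma> x)"
      using L1 Ia Ib by (smt (verit) add_mono mult_left_mono order_trans zero_le order_refl)
    also have "\<dots> = c0 * epow A2 \<theta> * (wolff \<alpha> p \<sigma> x + epow (intrinsic_pot \<alpha> p q \<sigma> x) (1-\<theta>))"
      by (simp add: distrib_left mult_ac add.commute)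
    also have "c0 * epow A2 \<theta> = ennreal C * epow A \<theta>"
      using th g by (simp add: hA2 c0_def C_def epow_mult epow_ennreal powr_powr ennreal_mult'[symmetric] mult_ac)
    finally show "wolff \<alpha> p (density \<sigma> (\<lambda>y. epow (wolff \<alpha> p \<nu> y) q)) x
       \<le> ennreal C * epow (wolff \<alpha> p \<nu> x) (q / (p - 1))
           * (wolff \<alpha> p \<sigma> x + epow (intrinsic_pot \<alpha> p q \<sigma> x) ((p - 1 - q) / (p - 1)))"
      unfolding th1 A_def \<theta>_def .
  qed
qed

end
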